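(* Let \(a,b,c\) be positive integers, \(m\) a positive integer that is not a perfect square, with \(\gcd(a,b^2-c^2m)=1\), and let \(A,B\in\mathbb Z\). Let \((\bar x,\bar y,\bar z,\bar w)\) be the unique element of \(\mathbb Z^4\) with \(0\leq\bar z,\bar w<a\) satisfying \(a(\bar x+\bar y\sqrt m)+(b+c\sqrt m)(\bar z+\bar w\sqrt m)=A+B\sqrt m\). Then the equation \(a(x+y\sqrt m)+(b+c\sqrt m)(z+w\sqrt m)=A+B\sqrt m\) has a solution with \(x,y,z,w\in\mathbb N\) if and only if \(\bar x\geq 0\) and \(\bar y\geq 0\).
   Context: \(\mathbb N\) denotes the set of non-negative integers. (Existence and uniqueness of \((\bar x,\bar y,\bar z,\bar w)\) under the stated hypotheses may be assumed.) *)

theory Defs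
  imports Complex_Main
begin

end

theory Submission
  imports Defs
begin

lemma sqrt_lin_zero:
  fixes p q m :: int
  assumes m: "m > 0" and ns: "\<not> (\<exists>k::int. m = k^2)"
    and e: "real_of_int p + real_of_int q * sqrt (real_of_int m) = 0"
  shows "p = 0 \<and> q = 0"
proof (cases "q = 0")
  case True then show ?thesis using e by simp
next
  case False
  have s: "sqrt (real_of_int m) = - real_of_int p / real_of_int q"
    using e False by (simp add: field_simps)
  have "real_of_int m = (sqrt (real_of_int m))^2" using m by simp
  also have "\<dots> = (real_of_int p)^2 / (real_of_int q)^2" by (simp add: s power_divide)
  finally have "real_of_int m * (real_of_int q)^2 = (real_of_int p)^2" using False by (simp add: field_simps)
  hence mq: "m * q^2 = p^2" by (metis of_int_eq_iff of_int_mult of_int_power)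
  hence "q^2 dvd p^2" by (metis dvd_triv_right)
  hence "q dvd p" by simp
  then obtain k where pk: "p = q * k" by blast
  have "m * q^2 = q^2 * k^2" using mq pk by (simp add: power_mult_distrib)
  hence "m = k^2" using False by (simp add: mult.commute)
  thus ?thesis using ns by blast
qed

lemma sqrt_lin_eq:
  fixes p q p' q' m :: int
  assumes m: "m > 0" and ns: "\<not> (\<exists>k::int. m = k^2)"
    and e: "real_of_int p + real_of_int q * sqrt (real_of_int m) = real_of_int p' + real_of_int q' * sqrt (real_of_int m)"
  shows "p = p' \<and> q = q'"
proof -
  have "real_of_int (p - p') + real_of_int (q - q') * sqrt (real_of_int m) = 0"
    using e by (simp add: algebra_simps)
  thus ?thesis using sqrt_lin_zero[OF m ns] by fastforce
qed

theorem lemma6: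
  fixes a b c m A B xb yb zb wb :: int
  assumes "a > 0" and "b > 0" and "c > 0" and "m > 0"
    and "\<not> (\<exists>k::int. m = k^2)"
    and "gcd a (b^2 - c^2 * m) = 1"
    and "0 \<le> zb" and "zb < a" and "0 \<le> wb" and "wb < a"
    and "real_of_int a * (real_of_int xb + real_of_int yb * sqrt (real_of_int m))
         + (real_of_int b + real_of_int c * sqrt (real_of_int m))
           * (real_of_int zb + real_of_int wb * sqrt (real_of_int m))
         = real_of_int A + real_of_int B * sqrt (real_of_int m)"
  shows "(\<exists>x y z w :: nat.
            real_of_int a * (real x + real y * sqrt (real_of_int m))
            + (real_of_int b + real_of_int c * sqrt (real_of_int m))
              * (real z + real w * sqrt (real_of_int m))
            = real_of_int A + real_of_int B * sqrt (real_of_int m))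
         \<longleftrightarrow> (xb \<ge> 0 \<and> yb \<ge> 0)"
proof -
  have sq: "sqrt (real_of_int m) * sqrt (real_of_int m) = real_of_int m"
    using assms(4) by simp
  have key: "real_of_int a * (real_of_int x + real_of_int y * sqrt (real_of_int m))
         + (real_of_int b + real_of_int c * sqrt (real_of_int m))
           * (real_of_int z + real_of_int w * sqrt (real_of_int m))
         = real_of_int A + real_of_int B * sqrt (real_of_int m)
     \<longleftrightarrow> a*x + b*z + c*m*w = A \<and> a*y + c*z + b*w = B" for x y z w :: int
  proof -
    have "real_of_int a * (real_of_int x + real_of_int y * sqrt (real_of_int m))
         + (real_of_int b + real_of_int c * sqrt (real_of_int m))
           * (real_of_int z + real_of_int w * sqrt (real_of_int m))
       = real_of_int (a*x + b*z + c*m*w) + real_of_int (a*y + c*z + b*w) * sqrt (real_of_int m)"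
    proof -
      let ?s = "sqrt (real_of_int m)"
      have "real_of_int a * (real_of_int x + real_of_int y * ?s)
         + (real_of_int b + real_of_int c * ?s) * (real_of_int z + real_of_int w * ?s)
         = real_of_int a * real_of_int x + real_of_int b * real_of_int z + real_of_int c * real_of_int w * (?s * ?s)
           + (real_of_int a * real_of_int y + real_of_int c * real_of_int z + real_of_int b * real_of_int w) * ?s"
        by (simp add: algebra_simps)
      also have "\<dots> = real_of_int (a*x + b*z + c*m*w) + real_of_int (a*y + c*z + b*w) * ?s"
        unfolding sq by simp
      finally show ?thesis .
    qed
    moreover have "real_of_int (a*x + b*z + c*m*w) + real_of_int (a*y + c*z + b*w) * sqrt (real_of_int m)
       = real_of_int A + real_of_int B * sqrt (real_of_int m) \<longleftrightarrow> a*x + b*z + c*m*w = A \<and> a*y + c*z + b*w = B"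
    proof
      assume "real_of_int (a*x + b*z + c*m*w) + real_of_int (a*y + c*z + b*w) * sqrt (real_of_int m)
       = real_of_int A + real_of_int B * sqrt (real_of_int m)"
      from sqrt_lin_eq[OF assms(4,5) this] show "a*x + b*z + c*m*w = A \<and> a*y + c*z + b*w = B" .
    next
      assume "a*x + b*z + c*m*w = A \<and> a*y + c*z + b*w = B"
      thus "real_of_int (a*x + b*z + c*m*w) + real_of_int (a*y + c*z + b*w) * sqrt (real_of_int m)
       = real_of_int A + real_of_int B * sqrt (real_of_int m)" by simp
    qed
    ultimately show ?thesis by simp
  qed
  have hb: "a*xb + b*zb + c*m*wb = A" "a*yb + c*zb + b*wb = B" using key assms(11) by auto
  show ?thesis
  proof
    assume "\<exists>x y z w :: nat.
            real_of_int a * (real x + real y * sqrt (real_of_int m))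
            + (real_of_int b + real_of_int c * sqrt (real_of_int m))
              * (real z + real w * sqrt (real_of_int m))
            = real_of_int A + real_of_int B * sqrt (real_of_int m)"
    then obtain x y z w :: nat where h:
      "real_of_int a * (real_of_int (int x) + real_of_int (int y) * sqrt (real_of_int m))
            + (real_of_int b + real_of_int c * sqrt (real_of_int m))
              * (real_of_int (int z) + real_of_int (int w) * sqrt (real_of_int m))
            = real_of_int A + real_of_int B * sqrt (real_of_int m)" by auto
    have h1: "a*int x + b*int z + c*m*int w = A" "a*int y + c*int z + b*int w = B"
      using key h by blast+
    define dz where "dz = int z - zb"
    define dw where "dw = int w - wb"
    have e1: "a*(int x - xb) + b*dz + c*m*dw = 0" using h1 hb unfolding dz_def dw_def by (simp add: algebra_simps)
    have e2: "a*(int y - yb) + c*dz + b*dw = 0" using h1 hb unfolding dz_def dw_def by (simp add: algebra_simps)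
    have e1': "b*dz + c*m*dw = -(a*(int x - xb))" using e1 by linarith
    have e2': "c*dz + b*dw = -(a*(int y - yb))" using e2 by linarith
    have "(b^2 - c^2*m) * dz = b*(b*dz + c*m*dw) - c*m*(c*dz + b*dw)" by (simp add: algebra_simps power2_eq_square)
    also have "\<dots> = b*(-(a*(int x - xb))) - c*m*(-(a*(int y - yb)))"
      using e1' e2' by simp
    also have "\<dots> = a * (c*m*(int y - yb) - b*(int x - xb))" by (simp add: algebra_simps)
    finally have "a dvd (b^2 - c^2*m) * dz" by (metis dvd_triv_left)
    hence "a dvd dz" using assms(6) by (metis coprime_dvd_mult_right_iff gcd_eq_1_imp_coprime)
    then obtain k where k: "dz = a*k" by blast
    have "(b^2 - c^2*m) * dw = b*(c*dz + b*dw) - c*(b*dz + c*m*dw)" by (simp add: algebra_simps power2_eq_square)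
    also have "\<dots> = b*(-(a*(int y - yb))) - c*(-(a*(int x - xb)))"
      using e1' e2' by simp
    also have "\<dots> = a * (c*(int x - xb) - b*(int y - yb))" by (simp add: algebra_simps)
    finally have "a dvd (b^2 - c^2*m) * dw" by (metis dvd_triv_left)
    hence "a dvd dw" using assms(6) by (metis coprime_dvd_mult_right_iff gcd_eq_1_imp_coprime)
    then obtain l where l: "dw = a*l" by blast
    have k0: "k \<ge> 0"
    proof (rule ccontr)
      assume "\<not> k \<ge> 0"
      hence "a*k \<le> a*(-1)" using assms(1) by (intro mult_left_mono) auto
      thus False using k assms(8) unfolding dz_def by linarith
    qed
    have l0: "l \<ge> 0"
    proof (rule ccontr)
      assume "\<not> l \<ge> 0"
      hence "a*l \<le> a*(-1)" using assms(1) by (intro mult_left_mono) auto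
      thus False using l assms(10) unfolding dw_def by linarith
    qed
    have "a*(int x - xb) = a*(-(b*k + c*m*l))" using e1 k l by (simp add: algebra_simps)
    hence "int x - xb = -(b*k + c*m*l)" using assms(1) by simp
    moreover have "b*k + c*m*l \<ge> 0" using k0 l0 assms(2,3,4) by simp
    ultimately have X: "xb \<ge> 0" by linarith
    have "a*(int y - yb) = a*(-(c*k + b*l))" using e2 k l by (simp add: algebra_simps)
    hence "int y - yb = -(c*k + b*l)" using assms(1) by simp
    moreover have "c*k + b*l \<ge> 0" using k0 l0 assms(2,3) by simp
    ultimately have "yb \<ge> 0" by linarith
    with X show "xb \<ge> 0 \<and> yb \<ge> 0" by simp
  next
    assume "xb \<ge> 0 \<and> yb \<ge> 0"
    hence "real (nat xb) = real_of_int xb" "real (nat yb) = real_of_int yb"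
      "real (nat zb) = real_of_int zb" "real (nat wb) = real_of_int wb" using assms(7,9) by auto
    thus "\<exists>x y z w :: nat.
            real_of_int a * (real x + real y * sqrt (real_of_int m))
            + (real_of_int b + real_of_int c * sqrt (real_of_int m))
              * (real z + real w * sqrt (real_of_int m))
            = real_of_int A + real_of_int B * sqrt (real_of_int m)"
      using assms(11) by (intro exI[of _ "nat xb"] exI[of _ "nat yb"] exI[of _ "nat zb"] exI[of _ "nat wb"]) simp
  qed
qed

end
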